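(* Let the (random) sets $S_{\rm tr},S_1,\dots,S_m$ be the output of the Randomized meta-Greedy algorithm (defined in the context), and suppose every $f_i$ is monotone and submodular. Let $b=\max\{\frac{1}{k-l},\frac1l\}$ and $c=3\sqrt{b\log(1/b)}$. Then $$\mathbb{E}\Bigl[\sum_{i=1}^m f_i(S_{\rm tr}\cup S_i)\Bigr]\;\ge\;\bigl(1-b-\exp(-1+c)\bigr)\,\mathrm{OPT}.$$
   Context: $V$ is a finite ground set with $|V|=n$; $k,l$ are integers with $1\le l<k\le n$. For $i=1,\dots,m$, $f_i:2^V\to\mathbb{R}_{\ge 0}$ is a set function; monotone means $A\subseteq B\Rightarrow f_i(A)\le f_i(B)$, submodular means $f_i(A)+f_i(B)\ge f_i(A\cup B)+f_i(A\cap B)$. Define $$\mathrm{OPT}=\max_{S_{\rm tr}\subseteq V,\,|S_{\rm tr}|\le l}\;\sum_{i=1}^m\;\max_{S_i\subseteq V,\,|S_i|\le k-l} f_i(S_{\rm tr}\cup S_i).$$ Randomized meta-Greedy: start with $S_{\rm tr}=S_1=\dots=S_m=\emptyset$. While $|S_{\rm tr}|<l$ and $|S_i|<k-l$ (all $S_i$ have equal size throughout): compute $e_i^*\in\arg\max_{e\in V}[f_i(S_{\rm tr}\cup S_i\cup\{e\})-f_i(S_{\rm tr}\cup S_i)]$ for each $i$ and $e_{\rm tr}^*\in\arg\max_{e\in V}\sum_{i=1}^m[f_i(S_{\rm tr}\cup S_i\cup\{e\})-f_i(S_{\rm tr}\cup S_i)]$; then, independently of the past, with probability $l/k$ set $S_{\rm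 tr}\leftarrow S_{\rm tr}\cup\{e^*_{\rm tr}\}$, and otherwise (probability $(k-l)/k$) set $S_i\leftarrow S_i\cup\{e_i^*\}$ for all $i=1,\dots,m$. After the loop, whichever of $S_{\rm tr}$ (size limit $l$) or the $S_i$'s (size limit $k-l$) has not reached its limit is filled up greedily with the same greedy rules until the limit is reached. Ties are broken arbitrarily; $\log$ is the natural logarithm. *)

theory Defs
  imports "HOL-Probability.Probability"
begin

text \<open>State of the algorithm: (S_tr, S, a, b) where S i is the set S_i, a is the number of
  additions made to S_tr so far and b the (common) number of additions made to every S_i.\<close>
type_synonym 'a mg_state = "'a set \<times> (nat \<Rightarrow> 'a set) \<times> nat \<times> nat"

definition mg_gain :: "('a set \<Rightarrow> real) \<Rightarrow> 'a set \<Rightarrow> 'a \<Rightarrow> real" where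
  "mg_gain g A e = g (A \<union> {e}) - g A"

definition add_tr :: "('a mg_state \<Rightarrow> 'a) \<Rightarrow> 'a mg_state \<Rightarrow> 'a mg_state" where
  "add_tr etr st = (case st of (T, S, a, b) \<Rightarrow> (T \<union> {etr st}, S, Suc a, b))"

definition add_S :: "(nat \<Rightarrow> 'a mg_state \<Rightarrow> 'a) \<Rightarrow> 'a mg_state \<Rightarrow> 'a mg_state" where
  "add_S ei st = (case st of (T, S, a, b) \<Rightarrow> (T, (\<lambda>i. S i \<union> {ei i st}), a, Suc b))"

text \<open>The greedy choices
  (with arbitrary tie-breaking, possibly depending on the current state) are given by the
  choice functions etr and ei.\<close>
fun mg_run :: "nat \<Rightarrow> nat \<Rightarrow> ('a mg_state \<Rightarrow> 'a) \<Rightarrow> (nat \<Rightarrow> 'a mg_state \<Rightarrow> 'a)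
    \<Rightarrow> nat \<Rightarrow> 'a mg_state \<Rightarrow> 'a mg_state pmf" where
  "mg_run k l etr ei 0 st = return_pmf st"
| "mg_run k l etr ei (Suc n) st =
     (case st of (T, S, a, b) \<Rightarrow>
        if a < l \<and> b < k - l then
          bernoulli_pmf (real l / real k) \<bind>
            (\<lambda>c. mg_run k l etr ei n (if c then add_tr etr st else add_S ei st))
        else if a < l then mg_run k l etr ei n (add_tr etr st)
        else if b < k - l then mg_run k l etr ei n (add_S ei st)
        else return_pmf st)"

definition meta_greedy :: "nat \<Rightarrow> nat \<Rightarrow> ('a mg_state \<Rightarrow> 'a) \<Rightarrow> (nat \<Rightarrow> 'a mg_state \<Rightarrow> 'a)
    \<Rightarrow> 'a mg_state pmf" where
  "meta_greedy k l etr ei = mg_run k l etr ei k ({}, (\<lambda>i. {}), 0, 0)"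

definition OPT :: "'a set \<Rightarrow> nat \<Rightarrow> (nat \<Rightarrow> 'a set \<Rightarrow> real) \<Rightarrow> nat \<Rightarrow> nat \<Rightarrow> real" where
  "OPT V m f k l =
     Max ((\<lambda>T. \<Sum>i=1..m. Max ((\<lambda>S. f i (T \<union> S)) ` {S. S \<subseteq> V \<and> card S \<le> k - l}))
          ` {T. T \<subseteq> V \<and> card T \<le> l})"

definition monotone_sf :: "'a set \<Rightarrow> ('a set \<Rightarrow> real) \<Rightarrow> bool" where
  "monotone_sf V g \<longleftrightarrow> (\<forall>A B. A \<subseteq> B \<and> B \<subseteq> V \<longrightarrow> g A \<le> g B)"

definition submodular_sf :: "'a set \<Rightarrow> ('a set \<Rightarrow> real) \<Rightarrow> bool" where
  "submodular_sf V g \<longleftrightarrow>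
     (\<forall>A B. A \<subseteq> V \<and> B \<subseteq> V \<longrightarrow> g A + g B \<ge> g (A \<union> B) + g (A \<inter> B))"

end

theory Submission
  imports Defs
begin


lemma union_bound:
  assumes "finite Y" "Y \<subseteq> V" "X \<subseteq> V"
    and mono: "monotone_sf V g" and sub: "submodular_sf V g"
  shows "g (X \<union> Y) \<le> g X + (\<Sum>e\<in>Y. mg_gain g X e)"
  using assms(1,2)
proof (induction Y rule: finite_induct)
  case empty then show ?case by simp
next
  case (insert e Y)
  have A: "X \<union> Y \<subseteq> V" "X \<union> {e} \<subseteq> V" using insert assms(3) by auto
  have eq: "(X \<union> Y) \<union> (X \<union> {e}) = X \<union> insert e Y" by auto
  have "g (X \<union> Y) + g (X \<union> {e}) \<ge> g ((X \<union> Y) \<union> (X \<union> {e})) + g ((X \<union> Y) \<inter> (X \<union> {e}))"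
    using sub A unfolding submodular_sf_def by blast
  then have 1: "g (X \<union> Y) + g (X \<union> {e}) \<ge> g (X \<union> insert e Y) + g ((X \<union> Y) \<inter> (X \<union> {e}))"
    by (simp only: eq)
  have 2: "g X \<le> g ((X \<union> Y) \<inter> (X \<union> {e}))"
    using mono A unfolding monotone_sf_def by (intro mp[OF spec[OF spec[OF mono[unfolded monotone_sf_def]]]]) auto
  from 1 2 have "g (X \<union> insert e Y) \<le> g (X \<union> Y) + mg_gain g X e"
    unfolding mg_gain_def by linarith
  then show ?case using insert by (simp add: sum.insert)
qed

definition Fv :: "nat \<Rightarrow> (nat \<Rightarrow> 'a set \<Rightarrow> real) \<Rightarrow> 'a mg_state \<Rightarrow> real" where
  "Fv m f = (\<lambda>(T, S, a, b). \<Sum>i=1..m. f i (T \<union> S i))"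

definition valid :: "'a set \<Rightarrow> nat \<Rightarrow> nat \<Rightarrow> nat \<Rightarrow> 'a mg_state \<Rightarrow> bool" where
  "valid V m k l st = (case st of (T,S,a,b) \<Rightarrow> T \<subseteq> V \<and> card T \<le> a \<and> a \<le> l \<and> b \<le> k - l \<and>
      (\<forall>i\<in>{1..m}. S i \<subseteq> V \<and> card (S i) \<le> b))"

locale mg =
  fixes V :: "'a set" and m k l :: nat and f :: "nat \<Rightarrow> 'a set \<Rightarrow> real"
    and etr :: "'a mg_state \<Rightarrow> 'a" and ei :: "nat \<Rightarrow> 'a mg_state \<Rightarrow> 'a"
  assumes finV: "finite V"
    and l1: "1 \<le> l" and lk: "l < k"
    and nonneg: "\<And>i A. i \<in> {1..m} \<Longrightarrow> A \<subseteq> V \<Longrightarrow> f i A \<ge> 0"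
    and mono: "\<And>i. i \<in> {1..m} \<Longrightarrow> monotone_sf V (f i)"
    and submod: "\<And>i. i \<in> {1..m} \<Longrightarrow> submodular_sf V (f i)"
    and etr_greedy: "\<And>T S a b. etr (T, S, a, b) \<in> V \<and>
         (\<forall>e\<in>V. (\<Sum>i=1..m. mg_gain (f i) (T \<union> S i) e)
                 \<le> (\<Sum>i=1..m. mg_gain (f i) (T \<union> S i) (etr (T, S, a, b))))"
    and ei_greedy: "\<And>i T S a b. i \<in> {1..m} \<Longrightarrow> ei i (T, S, a, b) \<in> V \<and>
         (\<forall>e\<in>V. mg_gain (f i) (T \<union> S i) e \<le> mg_gain (f i) (T \<union> S i) (ei i (T, S, a, b)))"
begin

lemma finS: "finite {S. S \<subseteq> V \<and> card S \<le> j}"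
  by (rule finite_subset[of _ "Pow V"]) (use finV in auto)

lemma opt_ge:
  assumes "valid V m k l (T,S,a,b)"
  shows "Fv m f (T,S,a,b) \<le> OPT V m f k l"
proof -
  let ?g = "\<lambda>T. \<Sum>i=1..m. Max ((\<lambda>S. f i (T \<union> S)) ` {S. S \<subseteq> V \<and> card S \<le> k - l})"
  have "(\<Sum>i=1..m. f i (T \<union> S i)) \<le> ?g T"
  proof (rule sum_mono)
    fix i assume i: "i \<in> {1..m}"
    show "f i (T \<union> S i) \<le> Max ((\<lambda>S. f i (T \<union> S)) ` {S. S \<subseteq> V \<and> card S \<le> k - l})"
    proof (rule Max_ge)
      have "S i \<subseteq> V \<and> card (S i) \<le> b" "b \<le> k - l" using assms i unfolding valid_def by auto
      then have "S i \<in> {S. S \<subseteq> V \<and> card S \<le> k - l}" by auto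
      then show "f i (T \<union> S i) \<in> (\<lambda>S. f i (T \<union> S)) ` {S. S \<subseteq> V \<and> card S \<le> k - l}" by (rule imageI)
    qed (simp add: finS)
  qed
  also have "?g T \<le> OPT V m f k l"
    unfolding OPT_def
  proof (rule Max_ge)
    have "T \<in> {T. T \<subseteq> V \<and> card T \<le> l}" using assms by (auto simp: valid_def)
    then show "?g T \<in> ?g ` {T. T \<subseteq> V \<and> card T \<le> l}" by (rule imageI)
  qed (simp add: finS)
  finally show ?thesis by (simp add: Fv_def)
qed

lemma opt_witness:
  obtains T0 S0 where "T0 \<subseteq> V" "card T0 \<le> l" "\<And>i. S0 i \<subseteq> V" "\<And>i. card (S0 i) \<le> k - l"
    "OPT V m f k l = (\<Sum>i=1..m. f i (T0 \<union> S0 i))"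
proof -
  let ?C = "{S. S \<subseteq> V \<and> card S \<le> k - l}"
  let ?g = "\<lambda>T. \<Sum>i=1..m. Max ((\<lambda>S. f i (T \<union> S)) ` ?C)"
  have ne1: "{} \<in> {T. T \<subseteq> V \<and> card T \<le> l}" by simp
  have ne2: "{} \<in> ?C" by simp
  have "OPT V m f k l \<in> ?g ` {T. T \<subseteq> V \<and> card T \<le> l}"
    unfolding OPT_def
  proof (rule Max_in)
    show "finite (?g ` {T. T \<subseteq> V \<and> card T \<le> l})" by (intro finite_imageI finS)
    show "?g ` {T. T \<subseteq> V \<and> card T \<le> l} \<noteq> {}" using ne1 by blast
  qed
  then obtain T0 where T0: "T0 \<in> {T. T \<subseteq> V \<and> card T \<le> l}" "OPT V m f k l = ?g T0" by blast
  have "\<forall>i. \<exists>S. S \<in> ?C \<and> Max ((\<lambda>S. f i (T0 \<union> S)) ` ?C) = f i (T0 \<union> S)"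
  proof
    fix i
    have "Max ((\<lambda>S. f i (T0 \<union> S)) ` ?C) \<in> (\<lambda>S. f i (T0 \<union> S)) ` ?C"
    proof (rule Max_in)
      show "finite ((\<lambda>S. f i (T0 \<union> S)) ` ?C)" by (intro finite_imageI finS)
      show "(\<lambda>S. f i (T0 \<union> S)) ` ?C \<noteq> {}" using ne2 by blast
    qed
    then show "\<exists>S. S \<in> ?C \<and> Max ((\<lambda>S. f i (T0 \<union> S)) ` ?C) = f i (T0 \<union> S)" by blast
  qed
  then have "\<exists>S0. \<forall>i. S0 i \<in> ?C \<and> Max ((\<lambda>S. f i (T0 \<union> S)) ` ?C) = f i (T0 \<union> S0 i)"
    by (rule choice)
  then obtain S0 where S0: "\<And>i. S0 i \<in> ?C" "\<And>i. Max ((\<lambda>S. f i (T0 \<union> S)) ` ?C) = f i (T0 \<union> S0 i)"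
    by blast
  show ?thesis
  proof (rule that[of T0 S0])
    show "T0 \<subseteq> V" "card T0 \<le> l" using T0(1) by auto
    show "S0 i \<subseteq> V" "card (S0 i) \<le> k - l" for i using S0(1)[of i] by auto
    show "OPT V m f k l = (\<Sum>i=1..m. f i (T0 \<union> S0 i))" using T0(2) S0(2) by simp
  qed
qed

lemma gain_nonneg:
  assumes "i \<in> {1..m}" "X \<subseteq> V" "e \<in> V"
  shows "mg_gain (f i) X e \<ge> 0"
proof -
  have mm: "\<forall>A B. A \<subseteq> B \<and> B \<subseteq> V \<longrightarrow> f i A \<le> f i B"
    using mono[OF assms(1)] unfolding monotone_sf_def .
  have s1: "X \<subseteq> X \<union> {e}" by blast
  have s2: "X \<union> {e} \<subseteq> V" using assms(2,3) by blast
  have "f i X \<le> f i (X \<union> {e})"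
    using mm[rule_format, OF conjI[OF s1 s2]] .
  then show ?thesis unfolding mg_gain_def by simp
qed

lemma step_facts:
  assumes v: "valid V m k l (T,S,a,b)"
  defines "x \<equiv> (\<Sum>i=1..m. mg_gain (f i) (T \<union> S i) (etr (T,S,a,b)))"
    and "y \<equiv> (\<Sum>i=1..m. mg_gain (f i) (T \<union> S i) (ei i (T,S,a,b)))"
  shows "Fv m f (add_tr etr (T,S,a,b)) = Fv m f (T,S,a,b) + x"
    and "Fv m f (add_S ei (T,S,a,b)) = Fv m f (T,S,a,b) + y"
    and "0 \<le> x" and "x \<le> y"
    and "OPT V m f k l - Fv m f (T,S,a,b) \<le> real l * x + real (k - l) * y"
proof -
  have vv: "T \<subseteq> V \<and> card T \<le> a \<and> a \<le> l \<and> b \<le> k - l \<and> (\<forall>i\<in>{1..m}. S i \<subseteq> V \<and> card (S i) \<le> b)"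
    using v unfolding valid_def by simp
  have TV: "T \<subseteq> V" using vv by blast
  have SV: "\<And>i. i \<in> {1..m} \<Longrightarrow> S i \<subseteq> V" using vv by blast
  show "Fv m f (add_tr etr (T,S,a,b)) = Fv m f (T,S,a,b) + x"
    unfolding x_def Fv_def add_tr_def mg_gain_def
    by (simp add: sum_subtractf Un_ac)
  show "Fv m f (add_S ei (T,S,a,b)) = Fv m f (T,S,a,b) + y"
    unfolding y_def Fv_def add_S_def mg_gain_def
    by (simp add: sum_subtractf Un_ac)
  show x0: "0 \<le> x" unfolding x_def
  proof (intro sum_nonneg gain_nonneg)
    fix i assume i: "i \<in> {1..m}"
    show "T \<union> S i \<subseteq> V" using TV SV[OF i] by blast
    show "etr (T,S,a,b) \<in> V" using etr_greedy[of T S a b] by (rule conjunct1)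
  qed
  show "x \<le> y" unfolding x_def y_def
  proof (rule sum_mono)
    fix i assume i: "i \<in> {1..m}"
    have "etr (T,S,a,b) \<in> V" using etr_greedy[of T S a b] by (rule conjunct1)
    then show "mg_gain (f i) (T \<union> S i) (etr (T,S,a,b)) \<le> mg_gain (f i) (T \<union> S i) (ei i (T,S,a,b))"
      by (rule bspec[OF conjunct2[OF ei_greedy[OF i, of T S a b]]])
  qed
  obtain T0 S0 where T0: "T0 \<subseteq> V" "card T0 \<le> l" and S0: "\<And>i. S0 i \<subseteq> V" "\<And>i. card (S0 i) \<le> k - l"
    and opt: "OPT V m f k l = (\<Sum>i=1..m. f i (T0 \<union> S0 i))" by (rule opt_witness) blast
  have finT0: "finite T0" using T0 finV finite_subset by blast
  have finS0: "finite (S0 i)" for i using S0 finV finite_subset by blast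
  have bound: "f i (T0 \<union> S0 i) \<le> f i (T \<union> S i) + (\<Sum>e\<in>T0. mg_gain (f i) (T \<union> S i) e)
      + (\<Sum>e\<in>S0 i. mg_gain (f i) (T \<union> S i) e)" if i: "i \<in> {1..m}" for i
  proof -
    have XV: "T \<union> S i \<subseteq> V" using TV SV[OF i] by blast
    have mm: "\<forall>A B. A \<subseteq> B \<and> B \<subseteq> V \<longrightarrow> f i A \<le> f i B"
      using mono[OF i] unfolding monotone_sf_def .
    have "(T \<union> S i) \<union> (T0 \<union> S0 i) \<subseteq> V" using XV T0(1) S0(1)[of i] by blast
    then have "f i (T0 \<union> S0 i) \<le> f i ((T \<union> S i) \<union> (T0 \<union> S0 i))"
      using mm by blast
    also have "\<dots> \<le> f i (T \<union> S i) + (\<Sum>e\<in>T0 \<union> S0 i. mg_gain (f i) (T \<union> S i) e)"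
      by (rule union_bound[OF _ _ XV mono[OF i] submod[OF i]]) (use finT0 finS0 T0(1) S0(1)[of i] in auto)
    also have "(\<Sum>e\<in>T0 \<union> S0 i. mg_gain (f i) (T \<union> S i) e) \<le>
       (\<Sum>e\<in>T0. mg_gain (f i) (T \<union> S i) e) + (\<Sum>e\<in>S0 i. mg_gain (f i) (T \<union> S i) e)"
    proof -
      have "(\<Sum>e\<in>T0 \<union> S0 i. mg_gain (f i) (T \<union> S i) e) + (\<Sum>e\<in>T0 \<inter> S0 i. mg_gain (f i) (T \<union> S i) e)
         = (\<Sum>e\<in>T0. mg_gain (f i) (T \<union> S i) e) + (\<Sum>e\<in>S0 i. mg_gain (f i) (T \<union> S i) e)"
        by (rule sum.union_inter) (use finT0 finS0 in auto)
      moreover have "(\<Sum>e\<in>T0 \<inter> S0 i. mg_gain (f i) (T \<union> S i) e) \<ge> 0"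
        using T0(1) XV i by (intro sum_nonneg gain_nonneg) auto
      ultimately show ?thesis by linarith
    qed
    finally show ?thesis by linarith
  qed
  have s1: "(\<Sum>i=1..m. \<Sum>e\<in>T0. mg_gain (f i) (T \<union> S i) e) \<le> real l * x"
  proof -
    have "(\<Sum>i=1..m. \<Sum>e\<in>T0. mg_gain (f i) (T \<union> S i) e) = (\<Sum>e\<in>T0. \<Sum>i=1..m. mg_gain (f i) (T \<union> S i) e)"
      by (rule sum.swap)
    also have "\<dots> \<le> (\<Sum>e\<in>T0. x)"
    proof (rule sum_mono)
      fix e assume "e \<in> T0"
      then have "e \<in> V" using T0 by blast
      then show "(\<Sum>i=1..m. mg_gain (f i) (T \<union> S i) e) \<le> x"
        unfolding x_def by (rule bspec[OF conjunct2[OF etr_greedy[of T S a b]]])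
    qed
    also have "\<dots> = real (card T0) * x" by simp
    also have "\<dots> \<le> real l * x" using T0 x0 by (intro mult_right_mono) auto
    finally show ?thesis .
  qed
  have s2: "(\<Sum>i=1..m. \<Sum>e\<in>S0 i. mg_gain (f i) (T \<union> S i) e) \<le> real (k - l) * y"
  proof -
    have "(\<Sum>i=1..m. \<Sum>e\<in>S0 i. mg_gain (f i) (T \<union> S i) e)
        \<le> (\<Sum>i=1..m. real (k - l) * mg_gain (f i) (T \<union> S i) (ei i (T,S,a,b)))"
    proof (rule sum_mono)
      fix i assume i: "i \<in> {1..m}"
      have "(\<Sum>e\<in>S0 i. mg_gain (f i) (T \<union> S i) e) \<le> (\<Sum>e\<in>S0 i. mg_gain (f i) (T \<union> S i) (ei i (T,S,a,b)))"
      proof (rule sum_mono)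
        fix e assume "e \<in> S0 i"
        then have "e \<in> V" using S0 by blast
        then show "mg_gain (f i) (T \<union> S i) e \<le> mg_gain (f i) (T \<union> S i) (ei i (T,S,a,b))"
          by (rule bspec[OF conjunct2[OF ei_greedy[OF i, of T S a b]]])
      qed
      also have "\<dots> = real (card (S0 i)) * mg_gain (f i) (T \<union> S i) (ei i (T,S,a,b))" by simp
      also have "\<dots> \<le> real (k - l) * mg_gain (f i) (T \<union> S i) (ei i (T,S,a,b))"
      proof (intro mult_right_mono gain_nonneg[OF i])
        show "real (card (S0 i)) \<le> real (k - l)" using S0(2)[of i] by simp
        show "T \<union> S i \<subseteq> V" using TV SV[OF i] by blast
        show "ei i (T,S,a,b) \<in> V" using ei_greedy[OF i, of T S a b] by (rule conjunct1)
      qed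
      finally show "(\<Sum>e\<in>S0 i. mg_gain (f i) (T \<union> S i) e) \<le> real (k - l) * mg_gain (f i) (T \<union> S i) (ei i (T,S,a,b))" .
    qed
    also have "\<dots> = real (k - l) * y" by (simp add: y_def sum_distrib_left)
    finally show ?thesis .
  qed
  have "OPT V m f k l \<le> (\<Sum>i=1..m. f i (T \<union> S i) + (\<Sum>e\<in>T0. mg_gain (f i) (T \<union> S i) e)
      + (\<Sum>e\<in>S0 i. mg_gain (f i) (T \<union> S i) e))"
    unfolding opt by (rule sum_mono) (rule bound)
  also have "\<dots> = Fv m f (T,S,a,b) + (\<Sum>i=1..m. \<Sum>e\<in>T0. mg_gain (f i) (T \<union> S i) e)
     + (\<Sum>i=1..m. \<Sum>e\<in>S0 i. mg_gain (f i) (T \<union> S i) e)"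
    by (simp add: Fv_def sum.distrib)
  finally show "OPT V m f k l - Fv m f (T,S,a,b) \<le> real l * x + real (k - l) * y"
    using s1 s2 by linarith
qed

end




function Af :: "nat \<Rightarrow> nat \<Rightarrow> nat \<Rightarrow> nat \<Rightarrow> real" where
  "Af k l u 0 = 1"
| "Af k l 0 (Suc v) = (1 - 1 / real k) ^ Suc v"
| "Af k l (Suc u) (Suc v) = max ((1 - 1 / real k) * (real l / real k * Af k l u (Suc v) + real (k - l) / real k * Af k l (Suc u) v))
      (real l / real k * Af k l u (Suc v) + (real (k - l) / real k - 1 / real k) * Af k l (Suc u) v)"
  by pat_completeness auto
termination by (relation "Wellfounded.measure (\<lambda>(k,l,u,v). u + v)") auto

lemma Af0: "Af k l 0 v = (1 - 1 / real k) ^ v"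
  by (cases v) auto

lemma pq:
  assumes "l < k"
  shows "real (k - l) / real k = 1 - real l / real k" "0 \<le> real l / real k" "real l / real k \<le> 1"
    "1 / real k \<le> real (k - l) / real k" "0 \<le> 1 - 1 / real k" "1 - 1 / real k \<le> 1"
proof -
  have k0: "real k > 0" using assms by simp
  show "real (k - l) / real k = 1 - real l / real k" using assms k0 by (simp add: of_nat_diff field_simps)
  show "0 \<le> real l / real k" by simp
  show "real l / real k \<le> 1" using assms k0 by simp
  show "1 / real k \<le> real (k - l) / real k" using assms k0 by (intro divide_right_mono) auto
  show "0 \<le> 1 - 1 / real k" using assms k0 by simp
  show "1 - 1 / real k \<le> 1" using k0 by simp
qed

lemma Af_bounds:
  assumes lk: "l < k"
  shows "0 \<le> Af k l u v \<and> Af k l u v \<le> 1"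
proof (induction "u + v" arbitrary: u v rule: less_induct)
  case less
  note P = pq[OF lk]
  show ?case
  proof (cases v)
    case 0 then show ?thesis by simp
  next
    case (Suc v')
    note v = Suc
    show ?thesis
    proof (cases u)
      case 0
      have "0 \<le> (1 - 1 / real k) ^ Suc v'" "(1 - 1 / real k) ^ Suc v' \<le> 1"
        using P by (auto intro!: power_le_one simp del: power_Suc)
      then show ?thesis unfolding 0 v by (simp only: Af.simps)
    next
      case (Suc u')
      define p where "p = real l / real k"
      define r where "r = 1 - 1 / real k"
      define A1 where "A1 = Af k l u' (Suc v')"
      define A2 where "A2 = Af k l (Suc u') v'"
      have q: "real (k - l) / real k = 1 - p" unfolding p_def by (rule P(1))
      have h: "0 \<le> p" "p \<le> 1" "1 / real k \<le> 1 - p" "0 \<le> r" "r \<le> 1" "0 \<le> 1 / real k"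
      proof -
        show "0 \<le> p" unfolding p_def by (rule P(2))
        show "p \<le> 1" unfolding p_def by (rule P(3))
        show "1 / real k \<le> 1 - p" unfolding p_def using P(4) P(1) by linarith
        show "0 \<le> r" unfolding r_def by (rule P(5))
        show "r \<le> 1" unfolding r_def by (rule P(6))
        show "0 \<le> 1 / real k" by simp
      qed
      have h7: "0 \<le> 1 - p" "0 \<le> 1 - p - 1 / real k" using h by linarith+
      have a: "0 \<le> A1" "A1 \<le> 1" "0 \<le> A2" "A2 \<le> 1"
        using less[of u' "Suc v'"] less[of "Suc u'" v'] unfolding A1_def A2_def Suc v by auto
      have c1: "0 \<le> r * (p * A1 + (1 - p) * A2)" using h h7 a by (intro mult_nonneg_nonneg add_nonneg_nonneg) auto
      have c2: "r * (p * A1 + (1 - p) * A2) \<le> 1"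
      proof -
        have "p * A1 + (1 - p) * A2 \<le> p * 1 + (1 - p) * 1"
          using h h7 a by (intro add_mono mult_left_mono) auto
        then have "p * A1 + (1 - p) * A2 \<le> 1" by simp
        moreover have "0 \<le> p * A1 + (1 - p) * A2" using h h7 a by (intro mult_nonneg_nonneg add_nonneg_nonneg) auto
        ultimately show ?thesis using h by (simp add: mult_le_one)
      qed
      have c3: "0 \<le> p * A1 + (1 - p - 1 / real k) * A2" using h h7 a by (intro mult_nonneg_nonneg add_nonneg_nonneg) auto
      have c4: "p * A1 + (1 - p - 1 / real k) * A2 \<le> 1"
      proof -
        have "p * A1 + (1 - p - 1 / real k) * A2 \<le> p * 1 + (1 - p - 1 / real k) * 1"
          using h h7 a by (intro add_mono mult_left_mono) auto
        then have "p * A1 + (1 - p - 1 / real k) * A2 \<le> 1 - 1 / real k" by simp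
        then show ?thesis using h(6) by linarith
      qed
      have "Af k l u v = max (r * (p * A1 + (1 - p) * A2)) (p * A1 + (1 - p - 1 / real k) * A2)"
        unfolding Suc v Af.simps q p_def r_def A1_def A2_def ..
      then show ?thesis using c1 c2 c3 c4 by simp
    qed
  qed
qed

lemma comb:
  fixes p k A0 A1 A2 D x y :: real
  assumes "0 \<le> p" "p \<le> 1" "0 < k" "0 \<le> A1" "0 \<le> A2" "0 \<le> D" "x \<le> y" "0 \<le> x"
    and "D \<le> (k * p) * x + (k * (1 - p)) * y"
    and "A0 = max ((1 - 1 / k) * (p * A1 + (1 - p) * A2)) (p * A1 + ((1 - p) - 1 / k) * A2)"
  shows "p * A1 * (D - x) + (1 - p) * A2 * (D - y) \<le> A0 * D"
proof -
  define q where "q = 1 - p"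
  have q0: "0 \<le> q" using assms by (simp add: q_def)
  have e1: "D \<le> k * (p * x + q * y)" using assms(9) by (simp add: q_def algebra_simps)
  then have h1: "D / k \<le> p * x + q * y"
    using assms(3) by (simp add: divide_le_eq mult.commute)
  have "p * x + q * y \<le> p * y + q * y" using assms(1,7) by (simp add: mult_left_mono)
  also have "\<dots> = y" by (simp add: q_def algebra_simps)
  finally have "k * (p * x + q * y) \<le> k * y" using assms(3) by simp
  then have "D \<le> k * y" using e1 by linarith
  then have h2: "D / k \<le> y" using assms(3) by (simp add: divide_le_eq mult.commute)
  have key: "p * A1 * (D - x) + q * A2 * (D - y) = (p * A1 + q * A2) * D - (p * A1 * x + q * A2 * y)"
    by (simp add: algebra_simps)
  show ?thesis
  proof (cases "A1 \<le> A2")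
    case True
    have "A1 * (D / k) \<le> A1 * (p * x + q * y)" using h1 assms(4) by (rule mult_left_mono)
    moreover have "(A2 - A1) * q * (D / k) \<le> (A2 - A1) * q * y"
      using h2 True q0 by (intro mult_left_mono) auto
    ultimately have "(p * A1 + q * A2) * (D / k) \<le> p * A1 * x + q * A2 * y"
      by (simp add: algebra_simps q_def)
    then have "p * A1 * (D - x) + q * A2 * (D - y) \<le> (p * A1 + q * A2) * D - (p * A1 + q * A2) * (D / k)"
      unfolding key by linarith
    also have "\<dots> = (1 - 1 / k) * (p * A1 + q * A2) * D" by (simp add: algebra_simps)
    also have "\<dots> \<le> A0 * D" using assms(6,10) by (intro mult_right_mono) (auto simp: q_def)
    finally show ?thesis by (simp add: q_def)
  next
    case False
    have "A2 * (D / k) \<le> A2 * (p * x + q * y)" using h1 assms(5) by (rule mult_left_mono)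
    moreover have "p * A2 * x \<le> p * A1 * x" using False assms(1,8)
      by (intro mult_right_mono mult_left_mono) auto
    ultimately have "A2 * (D / k) \<le> p * A1 * x + q * A2 * y"
      by (simp add: algebra_simps)
    then have "p * A1 * (D - x) + q * A2 * (D - y) \<le> (p * A1 + q * A2) * D - A2 * (D / k)"
      unfolding key by linarith
    also have "\<dots> = (p * A1 + (q - 1 / k) * A2) * D" by (simp add: algebra_simps)
    also have "\<dots> \<le> A0 * D" using assms(6,10) by (intro mult_right_mono) (auto simp: q_def)
    finally show ?thesis by (simp add: q_def)
  qed
qed

lemma fin_run: "finite (set_pmf (mg_run k l etr ei n st))"
proof (induction n arbitrary: st)
  case 0 then show ?case by simp
next
  case (Suc n)
  obtain T S a b where st: "st = (T,S,a,b)" by (cases st) auto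
  have fb: "finite (set_pmf (bernoulli_pmf (real l / real k)))" by (rule finite_subset[of _ UNIV]) auto
  show ?case unfolding st using Suc.IH fb by (auto simp: set_bind_pmf)
qed




lemma Af_le_Psi:
  fixes Psi :: "nat \<Rightarrow> nat \<Rightarrow> real"
  assumes lk: "l < k"
    and H1: "\<And>u. 1 \<le> (1 - 1 / real k) ^ u * Psi u 0"
    and H2: "\<And>v. 1 \<le> Psi 0 v"
    and H3: "\<And>u v. real l / real k * Psi u (Suc v) + (1 - real l / real k) * Psi (Suc u) v \<le> Psi (Suc u) (Suc v)"
    and H4: "\<And>u v. Psi (Suc u) (Suc v) \<le> Psi (Suc u) v"
  shows "Af k l u v \<le> (1 - 1 / real k) ^ (u + v) * Psi u v"
proof (induction "u + v" arbitrary: u v rule: less_induct)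
  case less
  note P = pq[OF lk]
  define r where "r = 1 - 1 / real k"
  have r0: "0 \<le> r" using P(5) by (simp add: r_def)
  show ?case
  proof (cases v)
    case 0 then show ?thesis using H1[of u] by simp
  next
    case (Suc v')
    note v = Suc
    show ?thesis
    proof (cases u)
      case 0
      have "r ^ Suc v' * 1 \<le> r ^ Suc v' * Psi 0 (Suc v')" using H2 r0 by (intro mult_left_mono) auto
      then show ?thesis unfolding 0 v Af0 r_def by simp
    next
      case (Suc u')
      define p where "p = real l / real k"
      have h: "0 \<le> p" "p \<le> 1" "1 / real k \<le> 1 - p"
      proof -
        show "0 \<le> p" unfolding p_def by (rule P(2))
        show "p \<le> 1" unfolding p_def by (rule P(3))
        show "1 / real k \<le> 1 - p" unfolding p_def using P(4) P(1) by linarith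
      qed
      have h7: "0 \<le> 1 - p" "0 \<le> 1 - p - 1 / real k" using h by linarith+
      define R where "R = r ^ Suc (u' + v')"
      have R0: "0 \<le> R" using r0 by (simp add: R_def)
      define A1 where "A1 = Af k l u' (Suc v')"
      define A2 where "A2 = Af k l (Suc u') v'"
      define S1 where "S1 = Psi u' (Suc v')"
      define S2 where "S2 = Psi (Suc u') v'"
      define S0 where "S0 = Psi (Suc u') (Suc v')"
      have a1: "A1 \<le> R * S1" using less[of u' "Suc v'"] unfolding A1_def S1_def R_def r_def Suc v by simp
      have a2: "A2 \<le> R * S2" using less[of "Suc u'" v'] unfolding A2_def S2_def R_def r_def Suc v by simp
      have s3: "p * S1 + (1 - p) * S2 \<le> S0" using H3[of u' v'] unfolding p_def S0_def S1_def S2_def .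
      have s4: "S0 \<le> S2" using H4[of u' v'] unfolding S0_def S2_def .
      have goalR: "(1 - 1 / real k) ^ (u + v) * Psi u v = r * R * S0"
        unfolding Suc v R_def r_def S0_def by simp
      have c1: "r * (p * A1 + (1 - p) * A2) \<le> r * R * S0"
      proof -
        have "p * A1 + (1 - p) * A2 \<le> p * (R * S1) + (1 - p) * (R * S2)"
          using a1 a2 h h7 by (intro add_mono mult_left_mono) auto
        also have "\<dots> = R * (p * S1 + (1 - p) * S2)" by (simp add: algebra_simps)
        also have "\<dots> \<le> R * S0" using s3 R0 by (rule mult_left_mono)
        finally show ?thesis using r0 by (simp add: mult_left_mono mult.assoc)
      qed
      have c2: "p * A1 + (1 - p - 1 / real k) * A2 \<le> r * R * S0"
      proof -
        have "p * A1 + (1 - p - 1 / real k) * A2 \<le> p * (R * S1) + (1 - p - 1 / real k) * (R * S2)"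
          using a1 a2 h h7 by (intro add_mono mult_left_mono) auto
        also have "\<dots> = R * ((p * S1 + (1 - p) * S2) - S2 / real k)" by (simp add: algebra_simps)
        also have "\<dots> \<le> R * (S0 - S0 / real k)"
        proof (rule mult_left_mono[OF _ R0])
          have "S0 / real k \<le> S2 / real k" using s4 by (simp add: divide_right_mono)
          then show "p * S1 + (1 - p) * S2 - S2 / real k \<le> S0 - S0 / real k" using s3 by linarith
        qed
        also have "\<dots> = r * R * S0" by (simp add: r_def algebra_simps)
        finally show ?thesis .
      qed
      have "Af k l u v = max (r * (p * A1 + (1 - p) * A2)) (p * A1 + (1 - p - 1 / real k) * A2)"
        unfolding Suc v Af.simps P(1) p_def r_def A1_def A2_def ..
      then show ?thesis unfolding goalR using c1 c2 by simp
    qed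
  qed
qed




lemma final_bound:
  fixes k l :: nat
  assumes l4: "4 \<le> l" and n4: "4 \<le> k - l" and lk: "l < k"
    and bb_def: "bb = max (1 / real (k - l)) (1 / real l)"
    and cc_def: "cc = 3 * sqrt (bb * ln (1 / bb))"
    and cc1: "cc < 1"
  shows "Af k l l (k - l) \<le> bb + exp (-1 + cc)"
proof -
  define K where "K = real k"
  define N where "N = real (k - l)"
  define L where "L = real l"
  have KLN: "K = L + N" using lk by (simp add: K_def L_def N_def of_nat_diff)
  have L4: "4 \<le> L" using l4 by (simp add: L_def)
  have N4: "4 \<le> N" using n4 unfolding N_def by linarith
  have K8: "8 \<le> K" using KLN L4 N4 by linarith
  have bbN: "1 / N \<le> bb" "1 / L \<le> bb" unfolding bb_def N_def L_def by auto
  have bbpos: "0 < bb" using bbN N4 by (smt (verit) divide_pos_pos)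
  have bb4: "bb \<le> 1 / 4"
  proof -
    have "1 / N \<le> 1 / 4" "1 / L \<le> 1 / 4" using N4 L4 by (auto intro: divide_left_mono)
    then show ?thesis unfolding bb_def N_def[symmetric] L_def[symmetric] by simp
  qed
  have bbN1: "1 \<le> bb * N" using bbN(1) N4 by (simp add: divide_le_eq mult.commute)
  have lnb: "1 \<le> ln (1 / bb)"
  proof -
    have "4 \<le> 1 / bb" using bb4 bbpos by (simp add: le_divide_eq mult.commute)
    then have "ln 4 \<le> ln (1 / bb)" using bbpos by (subst ln_le_cancel_iff) auto
    moreover have "ln (4::real) = 2 * ln 2" using ln_realpow[of 2 2] by simp
    moreover have "2/3 \<le> ln (2::real)" by (rule ln2_ge_two_thirds)
    ultimately show ?thesis by linarith
  qed
  have bl0: "0 \<le> bb * ln (1 / bb)" using bbpos lnb bb4 by (intro mult_nonneg_nonneg) auto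
  have cc0: "0 \<le> cc" unfolding cc_def using bl0 by simp
  have cc2: "cc ^ 2 = 9 * (bb * ln (1 / bb))" unfolding cc_def using bl0
    by (simp add: power_mult_distrib)
  have ccN: "6 \<le> cc * N"
  proof -
    have "(cc * N) ^ 2 = 9 * (bb * N) * N * ln (1 / bb)" unfolding power_mult_distrib cc2
      by (simp add: power2_eq_square algebra_simps)
    also have "\<dots> \<ge> 36"
    proof -
      have "1 * 4 \<le> (bb * N) * N" using bbN1 N4 by (intro mult_mono) auto
      then have "4 * 1 \<le> ((bb * N) * N) * ln (1 / bb)" using lnb by (intro mult_mono) auto
      moreover have "9 * (bb * N) * N * ln (1 / bb) = 9 * ((bb * N) * N * ln (1 / bb))" by (simp only: mult.assoc)
      ultimately show ?thesis by linarith
    qed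
    finally have "6 ^ 2 \<le> (cc * N) ^ 2" by simp
    moreover have "0 \<le> cc * N" using cc0 N4 by simp
    ultimately show ?thesis by (rule power2_le_imp_le)
  qed
  define d where "d = cc * (K - 1)"
  define s where "s = d * N / (2 * K ^ 2)"
  define t where "t = d / (2 * K)"
  define p where "p = L / K"
  define q where "q = N / K"
  define x where "x = 1 + s"
  define y where "y = q * (1 + s) / (q + s)"
  define \<rho> where "\<rho> = K / (K - 1)"
  define r where "r = 1 - 1 / K"
  define C where "C = (\<rho> / x) powr d"
  define Psi where "Psi = (\<lambda>u v::nat. \<rho> powr d + C * x ^ u * y ^ v)"
  have K0: "0 < K" "0 < K - 1" using K8 by auto
  have d0: "0 \<le> d" "d \<le> K - 1" using cc0 cc1 K0 by (auto simp: d_def mult_le_cancel_right1)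
  have s0: "0 \<le> s" using d0 N4 K0 by (simp add: s_def)
  have q0: "0 < q" using N4 K0 by (simp add: q_def)
  have pq1: "p + q = 1"
  proof -
    have "p + q = (L + N) / K" by (simp add: p_def q_def add_divide_distrib)
    then show ?thesis using KLN K0 by simp
  qed
  have x0: "0 < x" using s0 by (simp add: x_def)
  have y0: "0 < y" using s0 q0 by (simp add: y_def)
  have y1: "y \<le> 1"
  proof -
    have "0 \<le> p" using L4 K0 by (simp add: p_def)
    then have "q \<le> 1" using pq1 by linarith
    then have "q * s \<le> s" using s0 q0 by (intro mult_left_le_one_le) auto
    then have "q * (1 + s) \<le> q + s" by (simp add: algebra_simps)
    then show ?thesis using q0 s0 by (simp add: y_def divide_le_eq)
  qed
  have rho1: "1 \<le> \<rho>" using K0 by (simp add: \<rho>_def)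
  have rrho: "r * \<rho> = 1" using K0 by (simp add: r_def \<rho>_def field_simps)
  have r0: "0 < r" using K8 by (simp add: r_def)
  have xrho: "\<rho> \<le> x"
  proof -
    have a: "4 * K ^ 2 \<le> 9 * (K - 1) ^ 2"
    proof -
      have "9 * (K - 1) ^ 2 - 4 * K ^ 2 = (5 * K - 3) * (K - 3)" by (simp add: power2_eq_square algebra_simps)
      moreover have "0 \<le> (5 * K - 3) * (K - 3)" using K8 by (intro mult_nonneg_nonneg) auto
      ultimately show ?thesis by linarith
    qed
    have E1: "s * (K - 1) = (cc * N) * (K - 1) ^ 2 / (2 * K ^ 2)"
      by (simp add: s_def d_def power2_eq_square algebra_simps)
    have G: "6 * (4 * K ^ 2 / 9) \<le> (cc * N) * (K - 1) ^ 2"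
      using ccN a by (intro mult_mono) auto
    have "6 * (4 * K ^ 2 / 9) / (2 * K ^ 2) \<le> (cc * N) * (K - 1) ^ 2 / (2 * K ^ 2)"
      by (rule divide_right_mono[OF G]) simp
    then have "s * (K - 1) \<ge> 6 * (4 * K ^ 2 / 9) / (2 * K ^ 2)" unfolding E1 .
    moreover have "6 * (4 * K ^ 2 / 9) / (2 * K ^ 2) = 4 / 3" using K0 by (simp add: field_simps)
    ultimately have "1 \<le> s * (K - 1)" by linarith
    then have "1 / (K - 1) \<le> s" using K0 by (simp add: divide_le_eq)
    moreover have "\<rho> = 1 + 1 / (K - 1)" using K0 by (simp add: \<rho>_def field_simps)
    ultimately show ?thesis by (simp add: x_def)
  qed
  have C0: "0 \<le> C" by (simp add: C_def)
  have H1: "1 \<le> r ^ u * Psi u 0" for u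
  proof -
    have "\<rho> ^ u \<le> Psi u 0"
    proof (cases "real u \<le> d")
      case True
      have "\<rho> ^ u = \<rho> powr real u" using rho1 by (simp add: powr_realpow)
      also have "\<dots> \<le> \<rho> powr d" using True rho1 by (rule powr_mono)
      also have "\<dots> \<le> Psi u 0" using C0 x0 by (simp add: Psi_def)
      finally show ?thesis .
    next
      case False
      have rx: "0 < \<rho> / x" "\<rho> / x \<le> 1" using rho1 x0 xrho by auto
      have "\<rho> ^ u = (\<rho> / x) ^ u * x ^ u" using x0 by (simp add: power_divide)
      also have "(\<rho> / x) ^ u = (\<rho> / x) powr real u" using rx by (simp add: powr_realpow)
      also have "\<dots> \<le> C" unfolding C_def using False rx by (intro powr_mono') auto
      finally have "\<rho> ^ u \<le> C * x ^ u" using x0 by (simp add: mult_right_mono)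
      also have "\<dots> \<le> Psi u 0" using rho1 by (simp add: Psi_def)
      finally show ?thesis .
    qed
    then have "r ^ u * \<rho> ^ u \<le> r ^ u * Psi u 0" using r0 by (simp add: mult_left_mono)
    moreover have "r ^ u * \<rho> ^ u = 1" using rrho by (simp add: power_mult_distrib[symmetric])
    ultimately show ?thesis by simp
  qed
  have H2: "1 \<le> Psi 0 v" for v
  proof -
    have "1 \<le> \<rho> powr d" using rho1 d0(1) by (rule ge_one_powr_ge_zero)
    moreover have "0 \<le> C * y ^ v" using C0 y0 by simp
    ultimately show ?thesis by (simp add: Psi_def)
  qed
  have pyqx: "p * y + q * x = x * y"
  proof -
    have "q + s > 0" using q0 s0 by simp
    then have qs: "0 < q + s" .
    have p: "p = 1 - q" using pq1 by simp
    have "p * (q * (1 + s) / (q + s)) + q * (1 + s) = (p * q * (1 + s) + q * (1 + s) * (q + s)) / (q + s)"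
      using qs by (simp add: field_simps)
    also have "p * q * (1 + s) + q * (1 + s) * (q + s) = (1 + s) * (q * (1 + s))"
      unfolding p by (simp add: algebra_simps)
    finally show ?thesis unfolding x_def y_def by simp
  qed
  have H3: "p * Psi u (Suc v) + (1 - p) * Psi (Suc u) v \<le> Psi (Suc u) (Suc v)" for u v
  proof -
    have q1: "1 - p = q" using pq1 by linarith
    have "p * Psi u (Suc v) + (1 - p) * Psi (Suc u) v
        = \<rho> powr d + C * x ^ u * y ^ v * (p * y + (1 - p) * x)"
      unfolding Psi_def by (simp add: algebra_simps)
    also have "\<dots> = Psi (Suc u) (Suc v)" unfolding q1 pyqx Psi_def by (simp add: algebra_simps)
    finally show ?thesis by simp
  qed
  have H4: "Psi (Suc u) (Suc v) \<le> Psi (Suc u) v" for u v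
  proof -
    have "C * x ^ Suc u * y ^ Suc v \<le> C * x ^ Suc u * y ^ v"
      using C0 x0 y0 y1 by (intro mult_left_mono) (auto simp: mult_left_le_one_le)
    then show ?thesis by (simp add: Psi_def)
  qed
  have main: "Af k l l (k - l) \<le> (1 - 1 / real k) ^ (l + (k - l)) * Psi l (k - l)"
  proof (rule Af_le_Psi[OF lk])
    show "1 \<le> (1 - 1 / real k) ^ u * Psi u 0" for u using H1[of u] by (simp add: r_def K_def)
    show "1 \<le> Psi 0 v" for v by (rule H2)
    show "real l / real k * Psi u (Suc v) + (1 - real l / real k) * Psi (Suc u) v \<le> Psi (Suc u) (Suc v)" for u v
      using H3[of u v] by (simp add: p_def L_def K_def)
    show "Psi (Suc u) (Suc v) \<le> Psi (Suc u) v" for u v by (rule H4)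
  qed
  have lk': "l + (k - l) = k" using lk by simp
  have rk: "(1 - 1 / real k) ^ k = exp (K * ln r)"
  proof -
    have "r ^ k = exp (ln (r ^ k))" using r0 by simp
    also have "\<dots> = exp (K * ln r)" by (simp add: ln_realpow K_def)
    finally show ?thesis by (simp add: r_def K_def)
  qed
  have rhod: "\<rho> powr d = exp (d * ln \<rho>)" using rho1 by (simp add: powr_def)
  have lnr: "K * ln r \<le> -1"
  proof -
    have "ln r \<le> r - 1" using r0 by (rule ln_le_minus_one)
    then have "K * ln r \<le> K * (r - 1)" using K0 by (intro mult_left_mono) auto
    also have "K * (r - 1) = -1" using K0 by (simp add: r_def)
    finally show ?thesis .
  qed
  have lnrho: "d * ln \<rho> \<le> cc"
  proof -
    have "ln \<rho> \<le> \<rho> - 1" using rho1 by (intro ln_le_minus_one) auto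
    then have "d * ln \<rho> \<le> d * (\<rho> - 1)" using d0 by (intro mult_left_mono) auto
    also have "d * (\<rho> - 1) = cc" using K0 by (simp add: d_def \<rho>_def field_simps)
    finally show ?thesis .
  qed
  have T1: "exp (K * ln r) * \<rho> powr d \<le> exp (-1 + cc)"
    unfolding rhod exp_add[symmetric] using lnr lnrho by simp
  have T1': "exp (K * ln r) * \<rho> powr d \<le> 1"
    using T1 cc1 by (smt (verit) exp_le_one_iff)
  define Z where "Z = x ^ l * y ^ (k - l) / x powr d"
  have Z0: "0 < Z" using x0 y0 by (simp add: Z_def)
  have st: "s = q * t" using K0 N4 by (simp add: s_def q_def t_def power2_eq_square field_simps)
  have t01: "0 \<le> t" "t \<le> 1" using d0 K0 by (auto simp: t_def divide_le_eq)
  have yst: "y = (1 + s) / (1 + t)"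
  proof -
    have "q + s = q * (1 + t)" using st by (simp add: algebra_simps)
    then show ?thesis using q0 by (simp add: y_def)
  qed
  have lnZ: "ln Z = (K - d) * ln (1 + s) - N * ln (1 + t)"
  proof -
    have "ln Z = L * ln x + N * ln y - d * ln x"
      using x0 y0 by (simp add: Z_def ln_div ln_mult ln_realpow L_def N_def)
    also have "ln y = ln (1 + s) - ln (1 + t)" using s0 t01 by (simp add: yst ln_div)
    finally show ?thesis using KLN by (simp add: x_def algebra_simps)
  qed
  have lnZb: "ln Z \<le> ln bb"
  proof -
    have a1: "ln (1 + s) \<le> s" using s0 ln_le_minus_one[of "1 + s"] by simp
    have a2: "t - t ^ 2 \<le> ln (1 + t)" using t01 by (rule ln_one_plus_pos_lower_bound)
    have "(K - d) * ln (1 + s) \<le> (K - d) * s" using a1 d0 by (intro mult_left_mono) auto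
    moreover have "N * (t - t ^ 2) \<le> N * ln (1 + t)" using a2 N4 by (intro mult_left_mono) auto
    ultimately have "ln Z \<le> (K - d) * s - N * (t - t ^ 2)" unfolding lnZ by linarith
    also have "(K - d) * s - N * (t - t ^ 2) = - (N * d ^ 2 / (4 * K ^ 2))"
      using K0 by (simp add: s_def t_def power2_eq_square field_simps)
    also have "- (N * d ^ 2 / (4 * K ^ 2)) \<le> - ln (1 / bb)"
    proof -
      have dd: "d ^ 2 = 9 * bb * ln (1 / bb) * (K - 1) ^ 2"
        unfolding d_def power_mult_distrib cc2 by simp
      have b9: "4 * K ^ 2 \<le> 9 * (K - 1) ^ 2"
      proof -
        have "9 * (K - 1) ^ 2 - 4 * K ^ 2 = (5 * K - 3) * (K - 3)" by (simp add: power2_eq_square algebra_simps)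
        moreover have "0 \<le> (5 * K - 3) * (K - 3)" using K8 by (intro mult_nonneg_nonneg) auto
        ultimately show ?thesis by linarith
      qed
      have "4 * K ^ 2 * 1 \<le> 9 * (K - 1) ^ 2 * (bb * N)" by (rule mult_mono[OF b9 bbN1]) auto
      then have "4 * K ^ 2 * ln (1 / bb) \<le> 9 * (K - 1) ^ 2 * (bb * N) * ln (1 / bb)"
        using lnb by (intro mult_right_mono) auto
      also have "\<dots> = N * d ^ 2" unfolding dd by (simp add: algebra_simps)
      finally have "ln (1 / bb) \<le> N * d ^ 2 / (4 * K ^ 2)" using K0
        by (simp add: le_divide_eq mult.commute)
      then show ?thesis by simp
    qed
    also have "- ln (1 / bb) = ln bb" using bbpos by (simp add: ln_div)
    finally show ?thesis .
  qed
  have Zb: "Z \<le> bb" using lnZb Z0 bbpos by simp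
  have T2: "exp (K * ln r) * (C * x ^ l * y ^ (k - l)) \<le> bb"
  proof -
    have "C * x ^ l * y ^ (k - l) = \<rho> powr d * Z"
      using x0 rho1 by (simp add: C_def Z_def powr_divide)
    then have "exp (K * ln r) * (C * x ^ l * y ^ (k - l)) = (exp (K * ln r) * \<rho> powr d) * Z" by simp
    also have "\<dots> \<le> 1 * Z" using T1' Z0 by (intro mult_right_mono) auto
    finally show ?thesis using Zb by simp
  qed
  have "Af k l l (k - l) \<le> exp (K * ln r) * (\<rho> powr d + C * x ^ l * y ^ (k - l))"
    using main unfolding lk' rk Psi_def by simp
  also have "\<dots> = exp (K * ln r) * \<rho> powr d + exp (K * ln r) * (C * x ^ l * y ^ (k - l))"
    by (simp add: algebra_simps)
  also have "\<dots> \<le> exp (-1 + cc) + bb" using T1 T2 by (rule add_mono)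
  finally show ?thesis by simp
qed




context mg begin

lemma valid_tr:
  assumes "valid V m k l (T,S,a,b)" "a < l"
  shows "valid V m k l (T \<union> {etr (T,S,a,b)}, S, Suc a, b)"
proof -
  have vv: "T \<subseteq> V \<and> card T \<le> a \<and> a \<le> l \<and> b \<le> k - l \<and> (\<forall>i\<in>{1..m}. S i \<subseteq> V \<and> card (S i) \<le> b)"
    using assms(1) unfolding valid_def by simp
  have e: "etr (T,S,a,b) \<in> V" using etr_greedy[of T S a b] by (rule conjunct1)
  have fT: "finite T" using vv finV finite_subset by blast
  have "card (T \<union> {etr (T,S,a,b)}) \<le> Suc (card T)" using fT by (simp add: card_insert_if)
  then show ?thesis using vv e assms(2) unfolding valid_def by auto
qed

lemma valid_S:
  assumes "valid V m k l (T,S,a,b)" "b < k - l"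
  shows "valid V m k l (T, (\<lambda>i. S i \<union> {ei i (T,S,a,b)}), a, Suc b)"
proof -
  have vv: "T \<subseteq> V \<and> card T \<le> a \<and> a \<le> l \<and> b \<le> k - l \<and> (\<forall>i\<in>{1..m}. S i \<subseteq> V \<and> card (S i) \<le> b)"
    using assms(1) unfolding valid_def by simp
  have "S i \<union> {ei i (T,S,a,b)} \<subseteq> V \<and> card (S i \<union> {ei i (T,S,a,b)}) \<le> Suc b" if i: "i \<in> {1..m}" for i
  proof -
    have e: "ei i (T,S,a,b) \<in> V" using ei_greedy[OF i, of T S a b] by (rule conjunct1)
    have s: "S i \<subseteq> V" "card (S i) \<le> b" using vv i by auto
    have fS: "finite (S i)" using s finV finite_subset by blast
    have "card (S i \<union> {ei i (T,S,a,b)}) \<le> Suc (card (S i))" using fS by (simp add: card_insert_if)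
    then show ?thesis using s e by auto
  qed
  then show ?thesis using vv assms(2) unfolding valid_def by auto
qed

lemma main_ind:
  assumes "valid V m k l (T,S,a,b)" "n = (l - a) + (k - l - b)"
  shows "OPT V m f k l - Af k l (l - a) (k - l - b) * (OPT V m f k l - Fv m f (T,S,a,b))
     \<le> measure_pmf.expectation (mg_run k l etr ei n (T,S,a,b)) (Fv m f)"
  using assms
proof (induction n arbitrary: T S a b)
  case 0
  then have "l - a = 0" "k - l - b = 0" by auto
  then show ?case by simp
next
  case (Suc n)
  define st where "st = (T,S,a,b)"
  define OP where "OP = OPT V m f k l"
  define D where "D = OP - Fv m f st"
  define x where "x = (\<Sum>i=1..m. mg_gain (f i) (T \<union> S i) (etr (T,S,a,b)))"
  define y where "y = (\<Sum>i=1..m. mg_gain (f i) (T \<union> S i) (ei i (T,S,a,b)))"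
  note sf = step_facts[OF Suc.prems(1), folded x_def y_def]
  have D0: "0 \<le> D" using opt_ge[OF Suc.prems(1)] unfolding D_def OP_def st_def by simp
  have ab: "a \<le> l" "b \<le> k - l" using Suc.prems(1) unfolding valid_def by auto
  have k0: "0 < real k" using lk by simp
  have Dxy: "D \<le> real l * x + real (k - l) * y" using sf(5) unfolding D_def OP_def st_def .
  have Dtr: "OP - Fv m f (T \<union> {etr (T,S,a,b)}, S, Suc a, b) = D - x"
    using sf(1) unfolding D_def st_def add_tr_def by simp
  have DS: "OP - Fv m f (T, (\<lambda>i. S i \<union> {ei i (T,S,a,b)}), a, Suc b) = D - y"
    using sf(2) unfolding D_def st_def add_S_def by simp
  have tr_eq: "add_tr etr (T,S,a,b) = (T \<union> {etr (T,S,a,b)}, S, Suc a, b)" by (simp add: add_tr_def)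
  have S_eq: "add_S ei (T,S,a,b) = (T, (\<lambda>i. S i \<union> {ei i (T,S,a,b)}), a, Suc b)" by (simp add: add_S_def)
  show ?case
  proof (cases "a < l")
    case al: True
    show ?thesis
    proof (cases "b < k - l")
      case bl: True
      define p where "p = real l / real k"
      have p01: "0 \<le> p" "p \<le> 1" unfolding p_def by (rule pq(2)[OF lk], rule pq(3)[OF lk])
      define E1 where "E1 = measure_pmf.expectation (mg_run k l etr ei n (add_tr etr (T,S,a,b))) (Fv m f)"
      define E2 where "E2 = measure_pmf.expectation (mg_run k l etr ei n (add_S ei (T,S,a,b))) (Fv m f)"
      have run: "mg_run k l etr ei (Suc n) (T,S,a,b) = bernoulli_pmf p \<bind>
          (\<lambda>c. mg_run k l etr ei n (if c then add_tr etr (T,S,a,b) else add_S ei (T,S,a,b)))"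
        using al bl by (simp add: p_def)
      have E: "measure_pmf.expectation (mg_run k l etr ei (Suc n) (T,S,a,b)) (Fv m f) = p * E1 + (1 - p) * E2"
        unfolding run
        by (subst pmf_expectation_bind[of UNIV]) (auto simp: fin_run UNIV_bool p01 E1_def E2_def)
      define u' where "u' = l - Suc a"
      define v' where "v' = k - l - Suc b"
      have uv: "l - a = Suc u'" "k - l - b = Suc v'" using al bl by (auto simp: u'_def v'_def)
      define A1 where "A1 = Af k l (l - Suc a) (k - l - b)"
      define A2 where "A2 = Af k l (l - a) (k - l - Suc b)"
      have n1: "n = (l - Suc a) + (k - l - b)" using Suc.prems(2) al by arith
      have n2: "n = (l - a) + (k - l - Suc b)" using Suc.prems(2) bl by arith
      have IH1: "OP - A1 * (D - x) \<le> E1"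
        using Suc.IH[OF valid_tr[OF Suc.prems(1) al] n1]
        unfolding E1_def A1_def tr_eq OP_def[symmetric] Dtr .
      have IH2: "OP - A2 * (D - y) \<le> E2"
        using Suc.IH[OF valid_S[OF Suc.prems(1) bl] n2]
        unfolding E2_def A2_def S_eq OP_def[symmetric] DS .
      have A0: "Af k l (l - a) (k - l - b) = max ((1 - 1 / real k) * (p * A1 + (1 - p) * A2))
          (p * A1 + ((1 - p) - 1 / real k) * A2)"
      proof -
        have "l - Suc a = u'" "k - l - Suc b = v'" by (simp_all add: u'_def v'_def)
        then show ?thesis unfolding uv A1_def A2_def Af.simps p_def pq(1)[OF lk] by simp
      qed
      have A12: "0 \<le> A1" "0 \<le> A2" using Af_bounds[OF lk] unfolding A1_def A2_def by auto
      have cmb: "p * A1 * (D - x) + (1 - p) * A2 * (D - y) \<le> Af k l (l - a) (k - l - b) * D"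
      proof (rule comb[OF p01 k0 A12 D0 sf(4) sf(3) _ A0])
        have "real k * p = real l" "real k * (1 - p) = real (k - l)"
          using k0 pq(1)[OF lk] by (auto simp: p_def field_simps)
        then show "D \<le> real k * p * x + real k * (1 - p) * y" using Dxy by simp
      qed
      have "OP - Af k l (l - a) (k - l - b) * D \<le> p * (OP - A1 * (D - x)) + (1 - p) * (OP - A2 * (D - y))"
        using cmb by (simp add: algebra_simps)
      also have "\<dots> \<le> p * E1 + (1 - p) * E2"
        using IH1 IH2 p01 by (intro add_mono mult_left_mono) auto
      finally show ?thesis unfolding E D_def OP_def st_def .
    next
      case bl: False
      then have b: "b = k - l" using ab by simp
      have run: "mg_run k l etr ei (Suc n) (T,S,a,b) = mg_run k l etr ei n (add_tr etr (T,S,a,b))"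
        using al bl by simp
      have n1: "n = (l - Suc a) + (k - l - b)" using Suc.prems(2) al by arith
      have IH1: "OP - Af k l (l - Suc a) (k - l - b) * (D - x) \<le> measure_pmf.expectation (mg_run k l etr ei n (add_tr etr (T,S,a,b))) (Fv m f)"
        using Suc.IH[OF valid_tr[OF Suc.prems(1) al] n1]
        unfolding tr_eq OP_def[symmetric] Dtr .
      then have "OP - D \<le> measure_pmf.expectation (mg_run k l etr ei (Suc n) (T,S,a,b)) (Fv m f)"
        unfolding run using b sf(3) by simp
      then show ?thesis using b unfolding D_def OP_def st_def by simp
    qed
  next
    case al: False
    then have a: "a = l" using ab by simp
    have bl: "b < k - l" using Suc.prems(2) a by simp
    have run: "mg_run k l etr ei (Suc n) (T,S,a,b) = mg_run k l etr ei n (add_S ei (T,S,a,b))"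
      using al bl by simp
    have n2: "n = (l - a) + (k - l - Suc b)" using Suc.prems(2) bl by arith
    have IH2: "OP - Af k l (l - a) (k - l - Suc b) * (D - y) \<le> measure_pmf.expectation (mg_run k l etr ei n (add_S ei (T,S,a,b))) (Fv m f)"
      using Suc.IH[OF valid_S[OF Suc.prems(1) bl] n2]
      unfolding S_eq OP_def[symmetric] DS .
    define r where "r = 1 - 1 / real k"
    define v' where "v' = k - l - Suc b"
    have v: "k - l - b = Suc v'" using bl by (simp add: v'_def)
    have r0: "0 \<le> r" using pq(5)[OF lk] by (simp add: r_def)
    have yD: "D - y \<le> r * D"
    proof -
      have "D \<le> real l * y + real (k - l) * y" using Dxy sf(4) by (smt (verit) mult_left_mono of_nat_0_le_iff)
      also have "\<dots> = real k * y" using lk by (simp add: of_nat_diff algebra_simps)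
      finally have "D / real k \<le> y" using k0 by (simp add: divide_le_eq mult.commute)
      then show ?thesis by (simp add: r_def algebra_simps)
    qed
    have "r ^ v' * (D - y) \<le> r ^ v' * (r * D)" using yD r0 by (intro mult_left_mono) auto
    then have "OP - r ^ Suc v' * D \<le> OP - r ^ v' * (D - y)" by (simp add: algebra_simps)
    also have "\<dots> \<le> measure_pmf.expectation (mg_run k l etr ei (Suc n) (T,S,a,b)) (Fv m f)"
    proof -
      have A2eq: "Af k l (l - a) (k - l - Suc b) = r ^ v'" using a by (simp add: Af0 r_def v'_def)
      show ?thesis using IH2 unfolding A2eq run .
    qed
    moreover have "Af k l (l - a) (k - l - b) = r ^ Suc v'" unfolding v using a by (simp add: Af0 r_def)
    ultimately show ?thesis unfolding D_def OP_def st_def by simp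
  qed
qed

end




lemma nontriv:
  fixes k l :: nat
  assumes l1: "1 \<le> l" and lk: "l < k"
    and bb_def: "bb = max (1 / real (k - l)) (1 / real l)"
    and cc_def: "cc = 3 * sqrt (bb * ln (1 / bb))"
    and pos: "0 < 1 - bb - exp (-1 + cc)"
  shows "4 \<le> l" "4 \<le> k - l" "cc < 1"
proof -
  define M where "M = min l (k - l)"
  have M1: "1 \<le> M" using l1 lk by (simp add: M_def)
  have bbM: "bb = 1 / real M"
  proof (cases "l \<le> k - l")
    case True
    then have "1 / real (k - l) \<le> 1 / real l" using l1 by (intro divide_left_mono) auto
    then have "bb = 1 / real l" unfolding bb_def by (rule max_absorb2)
    moreover have "M = l" unfolding M_def using True by (rule min_absorb1)
    ultimately show ?thesis by simp
  next
    case False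
    then have "1 / real l \<le> 1 / real (k - l)" using lk by (intro divide_left_mono) auto
    then have "bb = 1 / real (k - l)" unfolding bb_def by (rule max_absorb1)
    moreover have "M = k - l" unfolding M_def using False by simp
    ultimately show ?thesis by simp
  qed
  have bbpos: "0 < bb" using M1 bbM by simp
  have e1: "exp (-1 + cc) < 1" using pos bbpos by linarith
  show cc1: "cc < 1" using e1 by simp
  have "4 \<le> M"
  proof (rule ccontr)
    assume "\<not> 4 \<le> M"
    then have M3: "M \<le> 3" by simp
    show False
    proof (cases "M = 1")
      case True
      then have "bb = 1" using bbM by simp
      then show False using pos by simp
    next
      case False
      then have M2: "2 \<le> M" using M1 by simp
      have b3: "1 / 3 \<le> bb" unfolding bbM using M3 M1 by (intro divide_left_mono) auto
      have b2: "2 \<le> 1 / bb" using M2 bbM by simp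
      have "ln 2 \<le> ln (1 / bb)" using b2 bbpos by (subst ln_le_cancel_iff) auto
      moreover have "2/3 \<le> ln (2::real)" by (rule ln2_ge_two_thirds)
      ultimately have l23: "2/3 \<le> ln (1 / bb)" by linarith
      have "1 / 3 * (2 / 3) \<le> bb * ln (1 / bb)" using b3 l23 by (intro mult_mono) auto
      then have "(1/3) ^ 2 \<le> bb * ln (1 / bb)" by (simp add: power2_eq_square)
      then have "1/3 \<le> sqrt (bb * ln (1 / bb))" by (rule real_le_rsqrt)
      then have "1 \<le> cc" unfolding cc_def by simp
      then show False using cc1 by simp
    qed
  qed
  then show "4 \<le> l" "4 \<le> k - l" unfolding M_def by auto
qed

theorem theorem2:
  fixes V :: "'a set" and m k l :: nat and f :: "nat \<Rightarrow> 'a set \<Rightarrow> real"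
    and etr :: "'a mg_state \<Rightarrow> 'a" and ei :: "nat \<Rightarrow> 'a mg_state \<Rightarrow> 'a"
  assumes "finite V"
    and "1 \<le> l" "l < k" "k \<le> card V"
    and nonneg: "\<And>i A. i \<in> {1..m} \<Longrightarrow> A \<subseteq> V \<Longrightarrow> f i A \<ge> 0"
    and mono: "\<And>i. i \<in> {1..m} \<Longrightarrow> monotone_sf V (f i)"
    and submod: "\<And>i. i \<in> {1..m} \<Longrightarrow> submodular_sf V (f i)"
    and etr_greedy: "\<And>T S a b. etr (T, S, a, b) \<in> V \<and>
         (\<forall>e\<in>V. (\<Sum>i=1..m. mg_gain (f i) (T \<union> S i) e)
                 \<le> (\<Sum>i=1..m. mg_gain (f i) (T \<union> S i) (etr (T, S, a, b))))"
    and ei_greedy: "\<And>i T S a b. i \<in> {1..m} \<Longrightarrow> ei i (T, S, a, b) \<in> V \<and>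
         (\<forall>e\<in>V. mg_gain (f i) (T \<union> S i) e \<le> mg_gain (f i) (T \<union> S i) (ei i (T, S, a, b)))"
  shows "measure_pmf.expectation (meta_greedy k l etr ei)
            (\<lambda>(T, S, a, b). \<Sum>i=1..m. f i (T \<union> S i))
         \<ge> (let b = max (1 / real (k - l)) (1 / real l);
                c = 3 * sqrt (b * ln (1 / b))
            in (1 - b - exp (-1 + c)) * OPT V m f k l)"
proof -
  interpret mg V m k l f etr ei
    using assms by unfold_locales auto
  define bb where "bb = max (1 / real (k - l)) (1 / real l)"
  define cc where "cc = 3 * sqrt (bb * ln (1 / bb))"
  define st0 :: "'a mg_state" where "st0 = ({}, (\<lambda>i. {}), 0, 0)"
  define OP where "OP = OPT V m f k l"
  define A where "A = Af k l l (k - l)"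
  define E where "E = measure_pmf.expectation (meta_greedy k l etr ei) (\<lambda>(T, S, a, b). \<Sum>i=1..m. f i (T \<union> S i))"
  have v0: "valid V m k l ({}, (\<lambda>i. {}), 0, 0)" by (simp add: valid_def)
  have Fv_eq: "(\<lambda>(T, S, a, b). \<Sum>i=1..m. f i (T \<union> S i)) = Fv m f" by (simp add: Fv_def)
  have mi: "OP - A * (OP - Fv m f ({}, (\<lambda>i. {}), 0, 0)) \<le> E"
    using main_ind[OF v0, of k] assms(3) unfolding E_def meta_greedy_def Fv_eq OP_def A_def by simp
  have F0: "0 \<le> Fv m f ({}, (\<lambda>i. {}), 0, 0)"
    unfolding Fv_def by (auto intro!: sum_nonneg nonneg)
  have OPF: "Fv m f ({}, (\<lambda>i. {}), 0, 0) \<le> OP" unfolding OP_def by (rule opt_ge[OF v0])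
  have OP0: "0 \<le> OP" using F0 OPF by linarith
  have A01: "0 \<le> A" "A \<le> 1" using Af_bounds[OF assms(3)] unfolding A_def by auto
  have "A * (OP - Fv m f ({}, (\<lambda>i. {}), 0, 0)) \<le> A * OP" using A01 F0 by (intro mult_left_mono) auto
  then have E1: "(1 - A) * OP \<le> E" using mi by (simp add: algebra_simps)
  have goal: "(1 - bb - exp (-1 + cc)) * OP \<le> E"
  proof (cases "0 < 1 - bb - exp (-1 + cc)")
    case False
    then have "(1 - bb - exp (-1 + cc)) * OP \<le> 0" using OP0 by (simp add: mult_nonpos_nonneg)
    also have "0 \<le> (1 - A) * OP" using A01 OP0 by simp
    finally show ?thesis using E1 by linarith
  next
    case True
    note nt = nontriv[OF assms(2) assms(3) bb_def cc_def True]
    have "A \<le> bb + exp (-1 + cc)" unfolding A_def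
      by (rule final_bound[OF nt(1) nt(2) assms(3) bb_def cc_def nt(3)])
    then have "(1 - bb - exp (-1 + cc)) * OP \<le> (1 - A) * OP" using OP0 by (intro mult_right_mono) auto
    then show ?thesis using E1 by linarith
  qed
  then show ?thesis unfolding Let_def bb_def[symmetric] cc_def[symmetric] E_def[symmetric] OP_def[symmetric] .
qed


end
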